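(* Assume the subgraph $\mathcal G_{\sigma(t)}$ is undirected for all $t\ge0$, and that there exist $T_{\mathrm c}>0$ and a subsequence $\{t_{j_k}:k=0,1,2,\dots\}$ of the switching instants with $t_{j_0}=0$ and $t_{j_{k+1}}-t_{j_k}\le T_{\mathrm c}$, such that for every $k$ every node $i\in\{1,\dots,N\}$ is reachable from node $0$ in the union graph $\bigcup_{t_j\in[t_{j_k},t_{j_{k+1}})}\bar{\mathcal G}_{\sigma(t_j)}$. Then there exists $0<\delta<1$ such that $$\left\|\prod_{r=j_k}^{j_{k+1}-1}P_{\sigma(t_r)}\right\|\le\delta\quad\text{for all }k=0,1,2,\dots.$$
   Context: $\sigma:[0,\infty)\to\mathcal P=\{1,\dots,n_0\}$ is a piecewise constant switching signal: there are switching instants $0=t_0<t_1<\cdots$ and a dwell time $\tau>0$ with $t_{j+1}-t_j\ge\tau$, and $\sigma$ is constant on each $[t_j,t_{j+1})$. For each $p\in\mathcal P$, $\bar{\mathcal G}_p$ is a graph on nodes $\{0,1,\dots,N\}$ with edge set $\bar{\mathcal E}_p$ of ordered pairs $(j,i)$, $j\ne i$; $a_{ij}(t)=1$ if $(j,i)\in\bar{\mathcal E}_{\sigma(t)}$, else $0$. $\mathcal G_{\sigma(t)}$ is the subgraph on $\{1,\dots,N\}$ with the edges of $\bar{\mathcal E}_{\sigma(t)}$ among those nodes (undirected: $(i,j)$ edge iff $(j,i)$ edge), with Laplacian $\mathcal L_{\sigma(t)}$ ($l_{ii}=\sum_{j=1}^Na_{ij}(t)$, $l_{ij}=-a_{ij}(t)$,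 $i\ne j$). $\Delta_{\sigma(t)}=\mathrm{diag}(a_{10}(t),\dots,a_{N0}(t))$, $\mathcal H_{\sigma(t)}=\mathcal L_{\sigma(t)}+\Delta_{\sigma(t)}$, and $P_{\sigma(t)}\in\mathbb{R}^{N\times N}$ is the orthogonal projection onto $\ker\mathcal H_{\sigma(t)}$ (zero matrix if the kernel is trivial). Node $i$ is reachable from $0$ if the graph has edges $(0,i_2),(i_2,i_3),\dots,(i_s,i)$; the union graph has the union of edge sets. $\prod_{r=m}^n\Xi_r=\Xi_n\cdots\Xi_{m+1}\Xi_m$. $\|\cdot\|$ is the matrix norm induced by the Euclidean norm. *)

theory Defs
  imports "HOL-Analysis.Analysis"
begin

text \<open>Nodes: the leader (node 0) is None, followers 1..N are Some i, i :: 'n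
  (a finite type with CARD('n) = N).  An edge set is a set of ordered pairs (j,i).\<close>

definition adj :: "('n option \<times> 'n option) set \<Rightarrow> 'n option \<Rightarrow> 'n option \<Rightarrow> real" where
  "adj E i j = (if (j, i) \<in> E then 1 else 0)"

definition lapl :: "('n::finite option \<times> 'n option) set \<Rightarrow> real^'n^'n" where
  "lapl E = (\<chi> i j. if i = j then (\<Sum>l\<in>UNIV. adj E (Some i) (Some l)) else - adj E (Some i) (Some j))"

definition leader_diag :: "('n::finite option \<times> 'n option) set \<Rightarrow> real^'n^'n" where
  "leader_diag E = (\<chi> i j. if i = j then adj E (Some i) None else 0)"

definition Hmat :: "('n::finite option \<times> 'n option) set \<Rightarrow> real^'n^'n" where
  "Hmat E = lapl E + leader_diag E"

definition ker_proj :: "real^'n^'n \<Rightarrow> real^'n^'n" where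
  "ker_proj A = matrix (closest_point {v. A *v v = 0})"

fun mprod :: "(nat \<Rightarrow> real^'n^'n) \<Rightarrow> nat \<Rightarrow> nat \<Rightarrow> real^'n^'n" where
  "mprod F m 0 = mat 1"
| "mprod F m (Suc d) = F (m + d) ** mprod F m d"

end

theory Submission imports Defs begin

lemma proj_orth:
  fixes S :: "'a::euclidean_space set"
  assumes "subspace S" and "y \<in> S"
  shows "inner (a - closest_point S a) y = 0"
proof -
  have cl: "closed S" using assms(1) by (rule closed_subspace)
  have cv: "convex S" using assms(1) by (rule subspace_imp_convex)
  have ne: "S \<noteq> {}" using assms by auto
  let ?p = "closest_point S a"
  have p: "?p \<in> S" using closest_point_in_set[OF cl ne] .
  have "?p + y \<in> S" using assms p by (simp add: subspace_add)
  from closest_point_dot[OF cv cl this, of a] have 1: "inner (a - ?p) y \<le> 0" by simp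
  have "?p - y \<in> S" using assms p by (simp add: subspace_diff)
  from closest_point_dot[OF cv cl this, of a] have 2: "inner (a - ?p) y \<ge> 0" by (simp add: inner_minus_right)
  show ?thesis using 1 2 by simp
qed

lemma proj_char:
  fixes S :: "'a::euclidean_space set"
  assumes "subspace S" and "p \<in> S" and "\<And>y. y \<in> S \<Longrightarrow> inner (a - p) y = 0"
  shows "closest_point S a = p"
proof -
  have cl: "closed S" using assms(1) by (rule closed_subspace)
  have cv: "convex S" using assms(1) by (rule subspace_imp_convex)
  have "\<forall>z\<in>S. dist a p \<le> dist a z"
  proof
    fix z assume z: "z \<in> S"
    have "p - z \<in> S" using assms z by (simp add: subspace_diff)
    then have o: "inner (a - p) (p - z) = 0" using assms(3) by blast
    have og: "orthogonal (a-p) (p-z)" using o by (simp add: orthogonal_def)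
    have "(dist a z)^2 = (norm ((a - p) + (p - z)))^2" by (simp add: dist_norm)
    also have "\<dots> = (norm (a-p))^2 + (norm (p - z))^2"
      by (rule norm_add_Pythagorean[OF og])
    finally have "(dist a p)^2 \<le> (dist a z)^2" by (simp add: dist_norm)
    then show "dist a p \<le> dist a z" by (simp add: power2_le_iff_abs_le)
  qed
  then show ?thesis using closest_point_unique[OF cv cl assms(2)] by simp
qed

lemma proj_in:
  fixes S :: "'a::euclidean_space set"
  assumes "subspace S" shows "closest_point S a \<in> S"
  using closest_point_in_set[OF closed_subspace[OF assms]] assms subspace_0 by blast

lemma proj_linear:
  fixes S :: "'a::euclidean_space set"
  assumes S: "subspace S"
  shows "linear (closest_point S)"
proof (rule linearI)
  fix x y
  show "closest_point S (x + y) = closest_point S x + closest_point S y"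
    apply (rule proj_char[OF S])
    using S proj_in subspace_add apply blast
    using proj_orth[OF S, of _ x] proj_orth[OF S, of _ y]
    by (simp add: algebra_simps inner_diff_left inner_add_left)
next
  fix c :: real and x
  show "closest_point S (c *\<^sub>R x) = c *\<^sub>R closest_point S x"
    apply (rule proj_char[OF S])
    using S proj_in subspace_scale apply blast
    using proj_orth[OF S, of _ x]
    by (metis inner_scaleR_left mult_zero_right scaleR_right_diff_distrib)
qed

lemma proj_norm:
  fixes S :: "'a::euclidean_space set"
  assumes S: "subspace S"
  shows "norm (closest_point S a) \<le> norm a" and "norm (closest_point S a) = norm a \<Longrightarrow> closest_point S a = a"
proof -
  let ?p = "closest_point S a"
  have o: "inner (a - ?p) ?p = 0" using proj_orth[OF S proj_in[OF S]] .
  have e: "(norm a)^2 = (norm ?p)^2 + (norm (a - ?p))^2"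
    using norm_add_Pythagorean[of ?p "a - ?p"] o by (simp add: orthogonal_def inner_commute)
  then show "norm ?p \<le> norm a" by (metis le_add_same_cancel1 norm_ge_zero power2_le_iff_abs_le real_norm_def zero_le_power2 abs_norm_cancel)
  assume "norm ?p = norm a"
  with e have "norm (a - ?p) = 0" by simp
  then show "?p = a" by simp
qed

lemma ker_proj_apply: "ker_proj A *v x = closest_point {v. A *v v = 0} x"
proof -
  have S: "subspace {v. A *v v = 0}"
    by (auto simp: subspace_def matrix_vector_right_distrib matrix_vector_mult_scaleR)
  show ?thesis unfolding ker_proj_def using matrix_vector_mul(2)[OF proj_linear[OF S]] by metis
qed


lemma mprod_contract:
  fixes F :: "nat \<Rightarrow> real^'n^'n"
  assumes c1: "\<And>r x. norm (F r *v x) \<le> norm x"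
    and c2: "\<And>r x. norm (F r *v x) = norm x \<Longrightarrow> F r *v x = x"
  shows "norm (mprod F m d *v x) \<le> norm x \<and> (norm (mprod F m d *v x) = norm x \<longrightarrow>
     mprod F m d *v x = x \<and> (\<forall>r<d. F (m+r) *v x = x))"
proof (induction d)
  case 0
  then show ?case by simp
next
  case (Suc d)
  let ?y = "mprod F m d *v x"
  have eq: "mprod F m (Suc d) *v x = F (m+d) *v ?y" by (simp add: matrix_vector_mul_assoc)
  have le: "norm (F (m+d) *v ?y) \<le> norm ?y" by (rule c1)
  show ?case
  proof (intro conjI impI)
    have IH1: "norm ?y \<le> norm x" using Suc by blast
    show "norm (mprod F m (Suc d) *v x) \<le> norm x" unfolding eq using le IH1 by linarith
  next
    assume h: "norm (mprod F m (Suc d) *v x) = norm x"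
    have IH1: "norm ?y \<le> norm x" using Suc by blast
    have h': "norm (F (m+d) *v ?y) = norm x" using h eq by simp
    then have "norm ?y = norm x" using le IH1 by linarith
    with Suc have y: "?y = x" and r: "\<forall>r<d. F (m+r) *v x = x" by auto
    have fx: "F (m+d) *v x = x" using c2 h eq y by metis
    show "mprod F m (Suc d) *v x = x" using eq y fx by simp
    show "\<forall>r<Suc d. F (m+r) *v x = x" using r fx less_Suc_eq by auto
  qed
qed

lemma Hmat_apply:
  fixes E :: "('n::finite option \<times> 'n option) set"
  assumes nl: "\<And>x. (x, x) \<notin> E"
  shows "(Hmat E *v x) $ i = (\<Sum>j\<in>UNIV. adj E (Some i) (Some j) * (x$i - x$j)) + adj E (Some i) None * x$i"
proof -
  let ?a = "\<lambda>i j. adj E (Some i) (Some j)"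
  have aii: "?a i i = 0" using nl by (simp add: adj_def)
  have H: "(Hmat E) $ i $ j = (if i = j then (\<Sum>l\<in>UNIV. ?a i l) + adj E (Some i) None else 0) - ?a i j" for j
    using aii by (auto simp: Hmat_def lapl_def leader_diag_def)
  have "(Hmat E *v x) $ i = (\<Sum>j\<in>UNIV. (Hmat E) $ i $ j * x $ j)"
    by (simp add: matrix_vector_mult_def)
  also have "\<dots> = (\<Sum>j\<in>UNIV. (if i = j then ((\<Sum>l\<in>UNIV. ?a i l) + adj E (Some i) None) * x$j else 0) - ?a i j * x$j)"
    unfolding H by (intro sum.cong) (auto simp: algebra_simps)
  also have "\<dots> = ((\<Sum>l\<in>UNIV. ?a i l) + adj E (Some i) None) * x$i - (\<Sum>j\<in>UNIV. ?a i j * x$j)"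
    by (simp add: sum_subtractf)
  also have "\<dots> = (\<Sum>j\<in>UNIV. ?a i j * (x$i - x$j)) + adj E (Some i) None * x$i"
    by (simp add: algebra_simps sum_subtractf sum_distrib_left sum_distrib_right)
  finally show ?thesis .
qed

lemma ker_edges:
  fixes E :: "('n::finite option \<times> 'n option) set"
  assumes nl: "\<And>x. (x, x) \<notin> E"
    and sym: "\<And>i j. (Some j, Some i) \<in> E \<longleftrightarrow> (Some i, Some j) \<in> E"
    and hx: "Hmat E *v x = 0"
  shows "\<And>i j. (Some j, Some i) \<in> E \<Longrightarrow> x$i = x$j"
    and "\<And>i. (None, Some i) \<in> E \<Longrightarrow> x$i = 0"
proof -
  let ?a = "\<lambda>i j. adj E (Some i) (Some j)"
  let ?b = "\<lambda>i. adj E (Some i) None"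
  have asym: "?a i j = ?a j i" for i j using sym by (simp add: adj_def)
  have anon: "?a i j \<ge> 0" "?b i \<ge> 0" for i j by (auto simp: adj_def)
  define S1 where "S1 = (\<Sum>i\<in>UNIV. \<Sum>j\<in>UNIV. ?a i j * (x$i - x$j) * x$i)"
  define S3 where "S3 = (\<Sum>i\<in>UNIV. ?b i * (x$i)^2)"
  have "0 = (\<Sum>i\<in>UNIV. x$i * (Hmat E *v x)$i)" using hx by simp
  also have "\<dots> = S1 + S3"
    unfolding Hmat_apply[OF nl] S1_def S3_def
    by (simp add: algebra_simps sum.distrib sum_distrib_left sum_distrib_right power2_eq_square)
  finally have 0: "S1 + S3 = 0" by simp
  have "S1 = (\<Sum>j\<in>UNIV. \<Sum>i\<in>UNIV. ?a i j * (x$i - x$j) * x$i)" unfolding S1_def by (rule sum.swap)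
  also have "\<dots> = (\<Sum>i\<in>UNIV. \<Sum>j\<in>UNIV. ?a i j * (x$j - x$i) * x$j)"
    using asym by simp
  finally have S1': "S1 = (\<Sum>i\<in>UNIV. \<Sum>j\<in>UNIV. ?a i j * (x$j - x$i) * x$j)" .
  have 2: "2 * S1 = (\<Sum>i\<in>UNIV. \<Sum>j\<in>UNIV. ?a i j * (x$i - x$j)^2)"
    apply (subst mult_2, subst (1) S1_def, subst S1')
    by (simp add: sum.distrib[symmetric] algebra_simps power2_eq_square)
  have t1: "(\<Sum>i\<in>UNIV. \<Sum>j\<in>UNIV. ?a i j * (x$i - x$j)^2) \<ge> 0"
    using anon by (intro sum_nonneg mult_nonneg_nonneg) auto
  have t3: "S3 \<ge> 0" unfolding S3_def using anon by (intro sum_nonneg mult_nonneg_nonneg) auto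
  have z1: "(\<Sum>i\<in>UNIV. \<Sum>j\<in>UNIV. ?a i j * (x$i - x$j)^2) = 0" using 0 2 t1 t3 by linarith
  have z3: "S3 = 0" using 0 2 t1 t3 by linarith
  show "x$i = x$j" if e: "(Some j, Some i) \<in> E" for i j
  proof -
    have "\<forall>i\<in>UNIV. (\<Sum>j\<in>UNIV. ?a i j * (x$i - x$j)^2) = 0"
      using z1 anon by (subst sum_nonneg_eq_0_iff[symmetric]) (auto intro!: sum_nonneg)
    then have "\<forall>j\<in>UNIV. ?a i j * (x$i - x$j)^2 = 0" using anon
      by (subst sum_nonneg_eq_0_iff[symmetric]) auto
    then have "?a i j * (x$i - x$j)^2 = 0" by blast
    with e show ?thesis by (simp add: adj_def)
  qed
  show "x$i = 0" if e: "(None, Some i) \<in> E" for i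
  proof -
    have "\<forall>i\<in>UNIV. ?b i * (x$i)^2 = 0" using z3 anon unfolding S3_def
      by (subst sum_nonneg_eq_0_iff[symmetric]) auto
    then have "?b i * (x$i)^2 = 0" by blast
    with e show ?thesis by (simp add: adj_def)
  qed
qed

lemma reach_zero:
  fixes x :: "real^'n"
  assumes e1: "\<And>i j. (Some j, Some i) \<in> E \<Longrightarrow> x$i = x$j"
    and e2: "\<And>i. (None, Some i) \<in> E \<Longrightarrow> x$i = 0"
    and r: "(None, v) \<in> E\<^sup>+"
  shows "(case v of None \<Rightarrow> 0 | Some i \<Rightarrow> x$i) = 0"
  using r
proof (induction rule: trancl_induct)
  case (base y)
  then show ?case using e2 by (cases y) auto
next
  case (step y z)
  then show ?case using e1 e2 by (cases y; cases z) auto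
qed


lemma strict_contr_onorm:
  fixes Q :: "real^'n^'n"
  assumes h: "\<And>x. x \<noteq> 0 \<Longrightarrow> norm (Q *v x) < norm x"
  shows "onorm (\<lambda>x. Q *v x) < 1"
proof -
  have cont: "continuous_on (sphere 0 1) (\<lambda>x. norm (Q *v x))"
    by (intro continuous_intros)
  have ne: "sphere (0::real^'n) 1 \<noteq> {}" by simp
  obtain x0 where x0: "x0 \<in> sphere 0 1" and mx: "\<And>y. y \<in> sphere 0 1 \<Longrightarrow> norm (Q *v y) \<le> norm (Q *v x0)"
    using continuous_attains_sup[OF compact_sphere ne cont] by blast
  let ?c = "norm (Q *v x0)"
  have "x0 \<noteq> 0" using x0 by auto
  then have c1: "?c < 1" using h[of x0] x0 by simp
  have "norm (Q *v x) \<le> ?c * norm x" for x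
  proof (cases "x = 0")
    case True then show ?thesis by simp
  next
    case False
    let ?u = "(1 / norm x) *\<^sub>R x"
    have u: "?u \<in> sphere 0 1" using False by simp
    have xe: "x = norm x *\<^sub>R ?u" using False by simp
    have "norm (Q *v x) = norm x * norm (Q *v ?u)"
      by (subst xe) (simp add: matrix_vector_mult_scaleR)
    also have "\<dots> \<le> norm x * ?c" using mx[OF u] by (simp add: mult_left_mono)
    finally show ?thesis by (simp add: mult.commute)
  qed
  then have "onorm (\<lambda>x. Q *v x) \<le> ?c" by (rule onorm_le)
  with c1 show ?thesis by linarith
qed

definition lp :: "(nat \<Rightarrow> real^'n^'n) \<Rightarrow> nat list \<Rightarrow> real^'n^'n" where
  "lp G l = foldl (\<lambda>A p. G p ** A) (mat 1) l"

lemma mprod_lp: "mprod (\<lambda>r. G (s r)) m d = lp G (map (\<lambda>r. s (m + r)) [0..<d])"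
  by (induction d) (simp_all add: lp_def)

lemma t_grow:
  assumes dwell: "\<And>j. t (Suc j) - t j \<ge> (\<tau>::real)"
  shows "t (m + d) \<ge> t m + real d * \<tau>"
proof (induction d)
  case 0 then show ?case by simp
next
  case (Suc d) then show ?case using dwell[of "m+d"] by (simp add: algebra_simps)
qed


lemma ker_subspace: "subspace {v. (A::real^'n^'n) *v v = 0}"
  by (auto simp: subspace_def matrix_vector_right_distrib matrix_vector_mult_scaleR)

theorem lemma1:
  fixes n0 :: nat and \<sigma> :: "real \<Rightarrow> nat" and t :: "nat \<Rightarrow> real" and \<tau> :: real
    and Eb :: "nat \<Rightarrow> ('n::finite option \<times> 'n option) set"
    and Tc :: real and js :: "nat \<Rightarrow> nat"
  assumes sig_range: "\<And>s. s \<ge> 0 \<Longrightarrow> \<sigma> s \<in> {1..n0}"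
    and t0: "t 0 = 0"
    and tau: "\<tau> > 0"
    and dwell: "\<And>j. t (Suc j) - t j \<ge> \<tau>"
    and pw_const: "\<And>j s. t j \<le> s \<Longrightarrow> s < t (Suc j) \<Longrightarrow> \<sigma> s = \<sigma> (t j)"
    and no_loops: "\<And>p x. (x, x) \<notin> Eb p"
    and undirected: "\<And>s i j. s \<ge> 0 \<Longrightarrow>
        ((Some j, Some i) \<in> Eb (\<sigma> s) \<longleftrightarrow> (Some i, Some j) \<in> Eb (\<sigma> s))"
    and Tc_pos: "Tc > 0"
    and js_mono: "strict_mono js"
    and js0: "js 0 = 0"
    and js_gap: "\<And>k. t (js (Suc k)) - t (js k) \<le> Tc"
    and reach: "\<And>k i. (None, Some i) \<in> (\<Union>r\<in>{js k..<js (Suc k)}. Eb (\<sigma> (t r)))\<^sup>+"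
  shows "\<exists>\<delta>. 0 < \<delta> \<and> \<delta> < 1 \<and>
    (\<forall>k. onorm (\<lambda>x. mprod (\<lambda>r. ker_proj (Hmat (Eb (\<sigma> (t r))))) (js k) (js (Suc k) - js k) *v x) \<le> \<delta>)"
  proof -
  define G where "G = (\<lambda>p. ker_proj (Hmat (Eb p)))"
  define d where "d = (\<lambda>k. js (Suc k) - js k)"
  define Q where "Q = (\<lambda>k. mprod (\<lambda>r. G (\<sigma> (t r))) (js k) (d k))"
  have tpos: "t r \<ge> 0" for r
  proof -
    have "t (0 + r) \<ge> t 0 + real r * \<tau>" by (rule t_grow[where t=t and \<tau>=\<tau>, OF dwell])
    moreover have "0 \<le> real r * \<tau>" using tau by simp
    ultimately show ?thesis using t0 by simp
  qed
  have c1: "norm (G p *v x) \<le> norm x" for p x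
    unfolding G_def ker_proj_apply by (rule proj_norm(1)[OF ker_subspace])
  have c2: "norm (G p *v x) = norm x \<Longrightarrow> G p *v x = x" for p x
    unfolding G_def ker_proj_apply by (rule proj_norm(2)[OF ker_subspace])
  have jsk: "js k < js (Suc k)" for k using js_mono by (simp add: strict_mono_def)
  have strict: "norm (Q k *v x) < norm x" if xne: "x \<noteq> 0" for k x
  proof (rule ccontr)
    assume "\<not> ?thesis"
    have mc: "norm (Q k *v x) \<le> norm x \<and> (norm (Q k *v x) = norm x \<longrightarrow>
     Q k *v x = x \<and> (\<forall>r<d k. G (\<sigma> (t (js k + r))) *v x = x))"
      unfolding Q_def by (rule mprod_contract[of "\<lambda>r. G (\<sigma> (t r))"]) (auto intro: c1 c2)
    with \<open>\<not> ?thesis\<close> have fixr: "\<forall>r<d k. G (\<sigma> (t (js k + r))) *v x = x" by auto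
    let ?U = "\<Union>r\<in>{js k..<js (Suc k)}. Eb (\<sigma> (t r))"
    have kerx: "Hmat (Eb (\<sigma> (t r))) *v x = 0" if r: "r \<in> {js k..<js (Suc k)}" for r
    proof -
      have "r = js k + (r - js k)" "r - js k < d k" using r by (auto simp: d_def)
      then have "G (\<sigma> (t r)) *v x = x" using fixr by metis
      then have "closest_point {v. Hmat (Eb (\<sigma> (t r))) *v v = 0} x = x"
        unfolding G_def ker_proj_apply .
      then have "x \<in> {v. Hmat (Eb (\<sigma> (t r))) *v v = 0}"
        using proj_in[OF ker_subspace] by metis
      then show ?thesis by simp
    qed
    have e1: "x$i = x$j" if "(Some j, Some i) \<in> ?U" for i j
    proof -
      from that obtain r where r: "r \<in> {js k..<js (Suc k)}" and e: "(Some j, Some i) \<in> Eb (\<sigma> (t r))" by blast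
      show ?thesis using ker_edges(1)[OF no_loops undirected[OF tpos] kerx[OF r] e] .
    qed
    have e2: "x$i = 0" if "(None, Some i) \<in> ?U" for i
    proof -
      from that obtain r where r: "r \<in> {js k..<js (Suc k)}" and e: "(None, Some i) \<in> Eb (\<sigma> (t r))" by blast
      show ?thesis using ker_edges(2)[OF no_loops undirected[OF tpos] kerx[OF r] e] .
    qed
    have "x$i = 0" for i using reach_zero[where E="?U" and x=x, OF e1 e2 reach[where k=k and i=i]] by simp
    then have "x = 0" by (simp add: vec_eq_iff)
    with xne show False by simp
  qed
  have on1: "onorm (\<lambda>x. Q k *v x) < 1" for k
    by (rule strict_contr_onorm) (rule strict)
  define D where "D = nat \<lceil>Tc / \<tau>\<rceil>"
  have dle: "d k \<le> D" for k
  proof -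
    have "t (js k + d k) \<ge> t (js k) + real (d k) * \<tau>" by (rule t_grow[where t=t and \<tau>=\<tau>, OF dwell])
    moreover have "js k + d k = js (Suc k)" using jsk[of k] by (simp add: d_def)
    ultimately have "real (d k) * \<tau> \<le> Tc" using js_gap[of k] by simp
    then have "real (d k) \<le> Tc / \<tau>" using tau by (simp add: pos_le_divide_eq)
    then have "real (d k) \<le> real_of_int \<lceil>Tc / \<tau>\<rceil>" by linarith
    then show ?thesis unfolding D_def by linarith
  qed
  define L where "L = {l. set l \<subseteq> {1..n0} \<and> length l \<le> D}"
  define V where "V = range (\<lambda>k. onorm (\<lambda>x. Q k *v x))"
  have finL: "finite L" unfolding L_def by (rule finite_lists_length_le) simp
  have "V \<subseteq> (\<lambda>l. onorm (\<lambda>x. lp G l *v x)) ` L"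
  proof
    fix v assume "v \<in> V"
    then obtain k where v: "v = onorm (\<lambda>x. Q k *v x)" unfolding V_def by blast
    let ?l = "map (\<lambda>r. \<sigma> (t (js k + r))) [0..<d k]"
    have "Q k = lp G ?l" unfolding Q_def using mprod_lp[of G "\<lambda>r. \<sigma> (t r)"] by simp
    moreover have "?l \<in> L" unfolding L_def using dle[of k] sig_range[OF tpos] by auto
    ultimately show "v \<in> (\<lambda>l. onorm (\<lambda>x. lp G l *v x)) ` L" using v by (metis (no_types, lifting) image_eqI)
  qed
  then have finV: "finite V" using finL finite_subset by blast
  have neV: "V \<noteq> {}" unfolding V_def by simp
  have MV: "Max V < 1" using Max_in[OF finV neV] on1 unfolding V_def by auto
  show ?thesis
  proof (intro exI conjI allI)
    show "0 < max (1/2) (Max V)" by simp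
    show "max (1/2) (Max V) < 1" using MV by simp
    fix k
    have "onorm (\<lambda>x. Q k *v x) \<le> Max V" using finV unfolding V_def by (intro Max_ge) auto
    then show "onorm (\<lambda>x. mprod (\<lambda>r. ker_proj (Hmat (Eb (\<sigma> (t r))))) (js k) (js (Suc k) - js k) *v x) \<le> max (1/2) (Max V)"
      unfolding Q_def G_def d_def by simp
  qed
qed

end
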